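(* Every free quandle is right orderable and semi-latin.
   Context: A quandle is a non-empty set $Q$ with a binary operation $*$ such that $x*x=x$ for all $x$; for all $x,y$ there is a unique $z$ with $x=z*y$; and $(x*y)*z=(x*z)*(y*z)$ for all $x,y,z$. The free quandle on a set $S$ is the quandle $FQ(S)$ with a map $S\to FQ(S)$ satisfying the usual universal property among quandles (equivalently: the set of symbols $a^w$, $a\in S$, $w$ in the free group $F(S)$, with $a^w*b^u=a^{wu^{-1}bu}$, modulo the equivalence relation generated by $a^w=a^{aw}$). A quandle $Q$ is right orderable if there is a linear order $<$ on $Q$ such that $x<y$ implies $x*z<y*z$ for all $x,y,z\in Q$. A quandle $Q$ is semi-latin if for each $x\in Q$ the map $L_x:Q\to Q$, $L_x(y)=x*y$, is injective. *)

theory Defs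
  imports Main
begin

definition quandle :: "'q set \<Rightarrow> ('q \<Rightarrow> 'q \<Rightarrow> 'q) \<Rightarrow> bool" where
  "quandle Q op \<longleftrightarrow> Q \<noteq> {} \<and>
     (\<forall>x\<in>Q. \<forall>y\<in>Q. op x y \<in> Q) \<and>
     (\<forall>x\<in>Q. op x x = x) \<and>
     (\<forall>x\<in>Q. \<forall>y\<in>Q. \<exists>!z. z \<in> Q \<and> x = op z y) \<and>
     (\<forall>x\<in>Q. \<forall>y\<in>Q. \<forall>z\<in>Q. op (op x y) z = op (op x z) (op y z))"

definition right_orderable :: "'q set \<Rightarrow> ('q \<Rightarrow> 'q \<Rightarrow> 'q) \<Rightarrow> bool" where
  "right_orderable Q op \<longleftrightarrow> (\<exists>r. strict_linear_order_on Q r \<and>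
     (\<forall>x\<in>Q. \<forall>y\<in>Q. \<forall>z\<in>Q. (x, y) \<in> r \<longrightarrow> (op x z, op y z) \<in> r))"

definition semi_latin :: "'q set \<Rightarrow> ('q \<Rightarrow> 'q \<Rightarrow> 'q) \<Rightarrow> bool" where
  "semi_latin Q op \<longleftrightarrow> (\<forall>x\<in>Q. inj_on (\<lambda>y. op x y) Q)"

text \<open>A letter (s, True) is the generator s, (s, False) is its inverse.\<close>
type_synonym 'a word = "('a \<times> bool) list"

definition cancels :: "'a \<times> bool \<Rightarrow> 'a \<times> bool \<Rightarrow> bool" where
  "cancels x y \<longleftrightarrow> fst x = fst y \<and> snd x \<noteq> snd y"

fun reduced :: "'a word \<Rightarrow> bool" where
  "reduced [] = True"
| "reduced [x] = True"
| "reduced (x # y # xs) = (\<not> cancels x y \<and> reduced (y # xs))"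

fun red_step :: "'a \<times> bool \<Rightarrow> 'a word \<Rightarrow> 'a word" where
  "red_step x [] = [x]"
| "red_step x (y # ys) = (if cancels x y then ys else x # y # ys)"

definition reduce :: "'a word \<Rightarrow> 'a word" where
  "reduce w = foldr red_step w []"

definition inv_word :: "'a word \<Rightarrow> 'a word" where
  "inv_word w = rev (map (\<lambda>(s, b). (s, \<not> b)) w)"

definition fg_mult :: "'a word \<Rightarrow> 'a word \<Rightarrow> 'a word" where
  "fg_mult u v = reduce (u @ v)"

definition fg_carrier :: "'a set \<Rightarrow> 'a word set" where
  "fg_carrier S = {w. reduced w \<and> fst ` set w \<subseteq> S}"

text \<open>Elements of FQ(S) are symbols a^w (a in S, w in F(S)) modulo a^w = a^(a w).
  The class of a^w is {a^(a^k w) | k in Z}; we represent it by its unique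
  representative whose reduced word w does not begin with a letter a^{+1} or a^{-1}.\<close>

definition strip :: "'a \<Rightarrow> 'a word \<Rightarrow> 'a word" where
  "strip a w = dropWhile (\<lambda>x. fst x = a) w"

definition fq_carrier :: "'a set \<Rightarrow> ('a \<times> 'a word) set" where
  "fq_carrier S = {(a, w). a \<in> S \<and> w \<in> fg_carrier S \<and> (w = [] \<or> fst (hd w) \<noteq> a)}"

definition fq_op :: "('a \<times> 'a word) \<Rightarrow> ('a \<times> 'a word) \<Rightarrow> ('a \<times> 'a word)" where
  "fq_op x y = (case x of (a, w) \<Rightarrow> case y of (b, u) \<Rightarrow>
     (a, strip a (fg_mult (fg_mult (fg_mult w (inv_word u)) [(b, True)]) u)))"

end

theory Submission
  imports Defs
begin
definition flipl :: "'a \<times> bool \<Rightarrow> 'a \<times> bool" where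
  "flipl x = (fst x, \<not> snd x)"

lemma cancels_iff: "cancels x y \<longleftrightarrow> y = flipl x"
  by (cases x; cases y) (auto simp: cancels_def flipl_def)

lemma flipl_flipl[simp]: "flipl (flipl x) = x"
  by (simp add: flipl_def)

lemma flipl_neq[simp]: "flipl x \<noteq> x" "x \<noteq> flipl x"
  by (cases x, simp add: flipl_def)+

lemma fst_flipl[simp]: "fst (flipl x) = fst x" and snd_flipl[simp]: "snd (flipl x) = (\<not> snd x)"
  by (simp_all add: flipl_def)

lemma reduced_Cons: "reduced (x # xs) \<longleftrightarrow> reduced xs \<and> (xs = [] \<or> hd xs \<noteq> flipl x)"
  by (cases xs) (auto simp: cancels_iff)

lemma reduced_nth: "reduced w \<longleftrightarrow> (\<forall>i. Suc i < length w \<longrightarrow> w ! Suc i \<noteq> flipl (w ! i))"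
proof (induction w)
  case Nil then show ?case by simp
next
  case (Cons x w)
  show ?case
  proof
    assume r: "reduced (x # w)"
    show "\<forall>i. Suc i < length (x # w) \<longrightarrow> (x # w) ! Suc i \<noteq> flipl ((x # w) ! i)"
    proof (intro allI impI)
      fix i assume i: "Suc i < length (x # w)"
      show "(x # w) ! Suc i \<noteq> flipl ((x # w) ! i)"
      proof (cases i)
        case 0 then show ?thesis using r i by (cases w) (auto simp: reduced_Cons)
      next
        case (Suc j) then show ?thesis using r i Cons.IH by (auto simp: reduced_Cons)
      qed
    qed
  next
    assume h: "\<forall>i. Suc i < length (x # w) \<longrightarrow> (x # w) ! Suc i \<noteq> flipl ((x # w) ! i)"
    have "reduced w" using h Cons.IH by force
    moreover have "w = [] \<or> hd w \<noteq> flipl x" using h[rule_format, of 0] by (cases w) auto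
    ultimately show "reduced (x # w)" by (simp add: reduced_Cons)
  qed
qed

lemma reduced_tl: "reduced w \<Longrightarrow> reduced (tl w)"
  by (cases w) (auto simp: reduced_Cons)

lemma reduced_append: "reduced (xs @ ys) \<longleftrightarrow> reduced xs \<and> reduced ys \<and> (xs = [] \<or> ys = [] \<or> hd ys \<noteq> flipl (last xs))"
  by (induction xs) (auto simp: reduced_Cons)

lemma red_step_reduced: "reduced r \<Longrightarrow> reduced (red_step x r)"
  by (cases r) (auto simp: reduced_Cons cancels_iff)

lemma red_step_inv: "reduced r \<Longrightarrow> red_step (flipl x) (red_step x r) = r"
proof (cases r)
  case Nil then show ?thesis by (simp add: cancels_iff)
next
  case (Cons y ys)
  assume r: "reduced r"
  show ?thesis
  proof (cases "y = flipl x")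
    case True
    then show ?thesis using r Cons by (cases ys) (auto simp: cancels_iff reduced_Cons)
  next
    case False then show ?thesis using Cons by (auto simp: cancels_iff)
  qed
qed

lemma red_step_inv': "reduced r \<Longrightarrow> red_step x (red_step (flipl x) r) = r"
  using red_step_inv[of r "flipl x"] by simp

lemma foldr_reduced: "reduced z \<Longrightarrow> reduced (foldr red_step u z)"
  by (induction u) (auto intro: red_step_reduced)

lemma reduced_reduce: "reduced (reduce w)"
  unfolding reduce_def by (rule foldr_reduced) simp

lemma reduce_Cons: "reduce (x # w) = red_step x (reduce w)"
  by (simp add: reduce_def)

lemma reduce_append: "reduce (u @ v) = foldr red_step u (reduce v)"
  by (simp add: reduce_def)

lemma reduce_reduced: "reduced w \<Longrightarrow> reduce w = w"
proof (induction w)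
  case Nil then show ?case by (simp add: reduce_def)
next
  case (Cons x w)
  then have "reduce w = w" by (simp add: reduced_Cons)
  then show ?case using Cons.prems by (cases w) (auto simp: reduce_Cons reduced_Cons cancels_iff)
qed

lemma foldr_red_step: "reduced r \<Longrightarrow> reduced z \<Longrightarrow>
  foldr red_step (red_step x r) z = red_step x (foldr red_step r z)"
proof (cases r)
  case Nil then show ?thesis by simp
next
  case (Cons y ys)
  assume r: "reduced r" and z: "reduced z"
  show ?thesis
  proof (cases "y = flipl x")
    case True
    then have "red_step x r = ys" using Cons by (simp add: cancels_iff)
    moreover have "red_step x (foldr red_step r z) = foldr red_step ys z"
      using Cons True red_step_inv'[OF foldr_reduced[OF z, of ys], of x] by simp
    ultimately show ?thesis by simp
  next
    case False then show ?thesis using Cons by (simp add: cancels_iff)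
  qed
qed

lemma foldr_reduce: "reduced z \<Longrightarrow> foldr red_step (reduce u) z = foldr red_step u z"
proof (induction u)
  case Nil then show ?case by (simp add: reduce_def)
next
  case (Cons x u)
  have "foldr red_step (reduce (x # u)) z = foldr red_step (red_step x (reduce u)) z"
    by (simp add: reduce_Cons)
  also have "\<dots> = red_step x (foldr red_step (reduce u) z)"
    by (rule foldr_red_step[OF reduced_reduce Cons.prems])
  also have "\<dots> = foldr red_step (x # u) z" using Cons by simp
  finally show ?case .
qed

lemma reduce_reduce_append: "reduce (reduce u @ v) = reduce (u @ v)"
  by (simp add: reduce_append foldr_reduce reduced_reduce)

lemma reduce_append_reduce: "reduce (u @ reduce v) = reduce (u @ v)"
  by (simp add: reduce_append reduce_reduced reduced_reduce)

lemma inv_word_Cons: "inv_word (x # w) = inv_word w @ [flipl x]"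
  by (cases x) (simp add: inv_word_def flipl_def)

lemma foldr_inv_cancel: "reduced z \<Longrightarrow> foldr red_step (inv_word w @ w) z = z"
proof (induction w arbitrary: z)
  case Nil then show ?case by (simp add: inv_word_def)
next
  case (Cons x w)
  have "foldr red_step (inv_word (x # w) @ x # w) z
      = foldr red_step (inv_word w) (red_step (flipl x) (red_step x (foldr red_step w z)))"
    by (simp add: inv_word_Cons)
  also have "\<dots> = foldr red_step (inv_word w) (foldr red_step w z)"
    using red_step_inv[OF foldr_reduced[OF Cons.prems]] by simp
  also have "\<dots> = z" using Cons.IH[OF Cons.prems] by simp
  finally show ?case .
qed

lemma reduce_inv_cancel: "reduce (inv_word w @ reduce (w @ g)) = reduce g"
proof -
  have "reduce (inv_word w @ reduce (w @ g)) = reduce (inv_word w @ w @ g)"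
    by (rule reduce_append_reduce)
  also have "\<dots> = foldr red_step (inv_word w @ w) (reduce g)"
    by (simp add: reduce_append)
  also have "\<dots> = reduce g" by (rule foldr_inv_cancel[OF reduced_reduce])
  finally show ?thesis .
qed

lemma red_step_letters: "fst ` set (red_step x r) \<subseteq> insert (fst x) (fst ` set r)"
  by (cases r) auto

lemma reduce_letters: "fst ` set (reduce w) \<subseteq> fst ` set w"
proof (induction w)
  case Nil then show ?case by (simp add: reduce_def)
next
  case (Cons x w) then show ?case using red_step_letters[of x "reduce w"] by (force simp: reduce_Cons)
qed

definition esum :: "'a word \<Rightarrow> int" where
  "esum w = (\<Sum>x\<leftarrow>w. if snd x then 1 else -1)"

lemma esum_Cons[simp]: "esum (x # w) = (if snd x then 1 else -1) + esum w"
  by (simp add: esum_def)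
lemma esum_Nil[simp]: "esum [] = 0" by (simp add: esum_def)
lemma esum_append[simp]: "esum (u @ v) = esum u + esum v" by (simp add: esum_def)

lemma esum_red_step: "esum (red_step x r) = (if snd x then 1 else -1) + esum r"
  by (cases r) (auto simp: cancels_def)

lemma esum_reduce: "esum (reduce w) = esum w"
  by (induction w) (auto simp: reduce_Cons esum_red_step reduce_def)

definition endV :: "'a \<Rightarrow> ('a \<times> bool) list \<Rightarrow> nat \<Rightarrow> 'a \<times> bool" where
  "endV a V = (\<lambda>i. if i < length V then V ! i else (a, True))"

definition repV :: "'a \<Rightarrow> ('a \<times> bool) list \<Rightarrow> bool" where
  "repV a V = (reduced V \<and> (V = [] \<or> fst (last V) \<noteq> a))"

definition consact :: "'a \<Rightarrow> 'a \<times> bool \<Rightarrow> ('a \<times> bool) list \<Rightarrow> ('a \<times> bool) list" where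
  "consact a x V = (if V \<noteq> [] \<and> hd V = flipl x then tl V else if V = [] \<and> fst x = a then [] else x # V)"

locale lo =
  fixes lt :: "'a \<times> bool \<Rightarrow> 'a \<times> bool \<Rightarrow> bool"
  assumes irr: "\<not> lt x x"
    and tr: "lt x y \<Longrightarrow> lt y z \<Longrightarrow> lt x z"
    and tot: "x \<noteq> y \<Longrightarrow> lt x y \<or> lt y x"
    and tf: "lt (s, True) (s, False)"
begin

lemma asy: "lt x y \<Longrightarrow> \<not> lt y x"
  using irr tr by blast

definition rot :: "'a \<times> bool \<Rightarrow> 'a \<times> bool \<Rightarrow> 'a \<times> bool \<Rightarrow> bool" where
  "rot c y z = (if lt c y then (lt c z \<longrightarrow> lt y z) else (\<not> lt c z \<and> lt y z))"

fun ctxo :: "('a \<times> bool) option \<Rightarrow> 'a \<times> bool \<Rightarrow> 'a \<times> bool \<Rightarrow> bool" where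
  "ctxo None = lt"
| "ctxo (Some c) = rot c"

lemma ctxo_irr: "\<not> ctxo o' y y"
  by (cases o') (auto simp: rot_def irr)

lemma ctxo_tr: "ctxo o' x y \<Longrightarrow> ctxo o' y z \<Longrightarrow> ctxo o' x z"
  by (cases o') (auto simp: rot_def split: if_splits intro: tr)

lemma ctxo_tot: "x \<noteq> y \<Longrightarrow> ctxo o' x y \<or> ctxo o' y x"
  by (cases o') (auto simp: rot_def dest: tot)

definition ctxs :: "(nat \<Rightarrow> 'a \<times> bool) \<Rightarrow> nat \<Rightarrow> ('a \<times> bool) option" where
  "ctxs \<xi> k = (if k = 0 then None else Some (flipl (\<xi> (k - 1))))"

definition lexat :: "(nat \<Rightarrow> 'a \<times> bool) \<Rightarrow> (nat \<Rightarrow> 'a \<times> bool) \<Rightarrow> nat \<Rightarrow> bool" where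
  "lexat \<xi> \<eta> k = ((\<forall>i<k. \<xi> i = \<eta> i) \<and> ctxo (ctxs \<xi> k) (\<xi> k) (\<eta> k))"

definition lexE :: "(nat \<Rightarrow> 'a \<times> bool) \<Rightarrow> (nat \<Rightarrow> 'a \<times> bool) \<Rightarrow> bool" where
  "lexE \<xi> \<eta> = (\<exists>k. lexat \<xi> \<eta> k)"

lemma ctxs_eq: "\<forall>i<k. \<xi> i = \<eta> i \<Longrightarrow> ctxs \<xi> k = ctxs \<eta> k"
  by (simp add: ctxs_def)

lemma lexE_irr: "\<not> lexE \<xi> \<xi>"
  by (auto simp: lexE_def lexat_def ctxo_irr)

lemma lexE_tr: assumes "lexE \<xi> \<eta>" "lexE \<eta> \<zeta>" shows "lexE \<xi> \<zeta>"
proof -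
  obtain k1 where k1: "\<forall>i<k1. \<xi> i = \<eta> i" "ctxo (ctxs \<xi> k1) (\<xi> k1) (\<eta> k1)"
    using assms(1) by (auto simp: lexE_def lexat_def)
  obtain k2 where k2: "\<forall>i<k2. \<eta> i = \<zeta> i" "ctxo (ctxs \<eta> k2) (\<eta> k2) (\<zeta> k2)"
    using assms(2) by (auto simp: lexE_def lexat_def)
  have e1: "ctxs \<xi> k1 = ctxs \<eta> k1" using k1(1) by (rule ctxs_eq)
  have e2: "ctxs \<eta> k2 = ctxs \<zeta> k2" using k2(1) by (rule ctxs_eq)
  consider "k1 < k2" | "k1 = k2" | "k2 < k1" by linarith
  then show ?thesis
  proof cases
    case 1
    then have "lexat \<xi> \<zeta> k1" using k1 k2 by (auto simp: lexat_def)
    then show ?thesis by (auto simp: lexE_def)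
  next
    case 2
    then have "lexat \<xi> \<zeta> k1" using k1 k2 e1 by (auto simp: lexat_def intro: ctxo_tr)
    then show ?thesis by (auto simp: lexE_def)
  next
    case 3
    then have "\<forall>i<k2. \<xi> i = \<zeta> i" using k1 k2 by auto
    moreover have "ctxs \<xi> k2 = ctxs \<eta> k2" using k1(1) 3 by (intro ctxs_eq) auto
    ultimately have "lexat \<xi> \<zeta> k2" using k1 k2 3 by (auto simp: lexat_def)
    then show ?thesis by (auto simp: lexE_def)
  qed
qed

lemma lexE_tot: assumes "\<xi> \<noteq> \<eta>" shows "lexE \<xi> \<eta> \<or> lexE \<eta> \<xi>"
proof -
  have "\<exists>k. \<xi> k \<noteq> \<eta> k" using assms by auto
  define k where "k = (LEAST k. \<xi> k \<noteq> \<eta> k)"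
  have kne: "\<xi> k \<noteq> \<eta> k" unfolding k_def by (rule LeastI_ex) fact
  have below: "\<forall>i<k. \<xi> i = \<eta> i" unfolding k_def using not_less_Least by blast
  have e: "ctxs \<xi> k = ctxs \<eta> k" using below by (rule ctxs_eq)
  have below': "\<forall>i<k. \<eta> i = \<xi> i" using below by auto
  from ctxo_tot[OF kne, of "ctxs \<xi> k"] show ?thesis
  proof
    assume "ctxo (ctxs \<xi> k) (\<xi> k) (\<eta> k)"
    then have "lexat \<xi> \<eta> k" using below by (simp add: lexat_def)
    then show ?thesis by (auto simp: lexE_def)
  next
    assume "ctxo (ctxs \<xi> k) (\<eta> k) (\<xi> k)"
    then have "lexat \<eta> \<xi> k" using below' e by (simp add: lexat_def)
    then show ?thesis by (auto simp: lexE_def)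
  qed
qed

definition redE :: "(nat \<Rightarrow> 'a \<times> bool) \<Rightarrow> bool" where
  "redE \<xi> = (\<forall>i. \<xi> (Suc i) \<noteq> flipl (\<xi> i))"

definition actE :: "'a \<times> bool \<Rightarrow> (nat \<Rightarrow> 'a \<times> bool) \<Rightarrow> (nat \<Rightarrow> 'a \<times> bool)" where
  "actE x \<xi> = (if \<xi> 0 = flipl x then (\<lambda>i. \<xi> (Suc i)) else (\<lambda>i. case i of 0 \<Rightarrow> x | Suc j \<Rightarrow> \<xi> j))"

definition d0 :: "'a \<times> bool \<Rightarrow> (nat \<Rightarrow> 'a \<times> bool) \<Rightarrow> int" where
  "d0 x \<xi> = (if \<xi> 0 = flipl x then (if lt (\<xi> 1) x then 1 else 0) else (if lt (flipl x) (\<xi> 0) then 1 else 0))"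

lemma d0_cases: "d0 x \<xi> = 0 \<or> d0 x \<xi> = 1"
  by (simp add: d0_def)

lemma redE_actE: "redE \<xi> \<Longrightarrow> redE (actE x \<xi>)"
  unfolding redE_def actE_def by (auto split: nat.splits)

lemma actE_pre: "\<xi> 0 \<noteq> flipl x \<Longrightarrow> actE x \<xi> 0 = x"
  "\<xi> 0 \<noteq> flipl x \<Longrightarrow> actE x \<xi> (Suc i) = \<xi> i"
  by (simp_all add: actE_def)

lemma actE_can: "\<xi> 0 = flipl x \<Longrightarrow> actE x \<xi> i = \<xi> (Suc i)"
  by (simp add: actE_def)

lemma ctxs_Suc: "ctxs \<xi> (Suc k) = Some (flipl (\<xi> k))"
  by (simp add: ctxs_def)

lemma ctxs_0: "ctxs \<xi> 0 = None"
  by (simp add: ctxs_def)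

lemma K2:
  assumes r1: "redE \<xi>" and r2: "redE \<eta>" and d: "d0 x \<xi> > d0 x \<eta>"
  shows "lexE (actE x \<xi>) (actE x \<eta>)"
proof -
  have n1: "\<xi> 1 \<noteq> x" if "\<xi> 0 = flipl x" using r1 that unfolding redE_def
    by (metis One_nat_def flipl_flipl)
  have n2: "\<eta> 1 \<noteq> x" if "\<eta> 0 = flipl x" using r2 that unfolding redE_def
    by (metis One_nat_def flipl_flipl)
  have dx: "d0 x \<xi> = 1" "d0 x \<eta> = 0" using d d0_cases[of x \<xi>] d0_cases[of x \<eta>] by auto
  show ?thesis
  proof (cases "\<xi> 0 = flipl x")
    case True
    then have a: "lt (\<xi> 1) x" using dx by (auto simp: d0_def split: if_splits)
    show ?thesis
    proof (cases "\<eta> 0 = flipl x")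
      case True
      then have "\<not> lt (\<eta> 1) x" using dx by (auto simp: d0_def split: if_splits)
      then have "lt x (\<eta> 1)" using tot n2 True by blast
      then have "lexat (actE x \<xi>) (actE x \<eta>) 0" using a True \<open>\<xi> 0 = flipl x\<close>
        by (auto simp: lexat_def actE_def ctxs_def intro: tr)
      then show ?thesis by (auto simp: lexE_def)
    next
      case False
      then have "lexat (actE x \<xi>) (actE x \<eta>) 0" using a True
        by (auto simp: lexat_def actE_def ctxs_def)
      then show ?thesis by (auto simp: lexE_def)
    qed
  next
    case F1: False
    then have a: "lt (flipl x) (\<xi> 0)" using dx by (auto simp: d0_def split: if_splits)
    show ?thesis
    proof (cases "\<eta> 0 = flipl x")
      case True
      then have "\<not> lt (\<eta> 1) x" using dx by (auto simp: d0_def split: if_splits)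
      then have "lt x (\<eta> 1)" using tot n2 True by blast
      then have "lexat (actE x \<xi>) (actE x \<eta>) 0" using True F1
        by (auto simp: lexat_def actE_def ctxs_def)
      then show ?thesis by (auto simp: lexE_def)
    next
      case False
      then have "\<not> lt (flipl x) (\<eta> 0)" using dx by (auto simp: d0_def split: if_splits)
      then have "lexat (actE x \<xi>) (actE x \<eta>) 1" using a False F1
        by (auto simp: lexat_def actE_def ctxs_def rot_def)
      then show ?thesis by (auto simp: lexE_def)
    qed
  qed
qed

lemma K1:
  assumes r1: "redE \<xi>" and r2: "redE \<eta>" and l: "lexE \<xi> \<eta>"
  shows "d0 x \<xi> < d0 x \<eta> \<or> (d0 x \<xi> = d0 x \<eta> \<and> lexE (actE x \<xi>) (actE x \<eta>))"
proof -
  have n1: "\<xi> 1 \<noteq> x" if "\<xi> 0 = flipl x" using r1 that unfolding redE_def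
    by (metis One_nat_def flipl_flipl)
  have n2: "\<eta> 1 \<noteq> x" if "\<eta> 0 = flipl x" using r2 that unfolding redE_def
    by (metis One_nat_def flipl_flipl)
  obtain k where ag: "\<forall>i<k. \<xi> i = \<eta> i" and cm: "ctxo (ctxs \<xi> k) (\<xi> k) (\<eta> k)"
    using l by (auto simp: lexE_def lexat_def)
  consider "k = 0" | "k = 1" | j where "k = Suc (Suc j)"
    by (metis One_nat_def not0_implies_Suc)
  then show ?thesis
  proof cases
    case 1
    then have c: "lt (\<xi> 0) (\<eta> 0)" using cm by (simp add: ctxs_def)
    show ?thesis
    proof (cases "\<xi> 0 = flipl x")
      case T1: True
      then have ne: "\<eta> 0 \<noteq> flipl x" using c irr[of "flipl x"] by auto
      then have "lt (flipl x) (\<eta> 0)" using c T1 by simp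
      then have d2: "d0 x \<eta> = 1" using ne by (simp add: d0_def)
      show ?thesis
      proof (cases "lt (\<xi> 1) x")
        case True
        then have "d0 x \<xi> = 1" using T1 by (simp add: d0_def)
        moreover have "lexat (actE x \<xi>) (actE x \<eta>) 0" using True T1 ne
          by (auto simp: lexat_def actE_def ctxs_def)
        ultimately show ?thesis using d2 by (auto simp: lexE_def)
      next
        case False
        then have "d0 x \<xi> = 0" using T1 by (simp add: d0_def)
        then show ?thesis using d2 by simp
      qed
    next
      case F1: False
      show ?thesis
      proof (cases "\<eta> 0 = flipl x")
        case T2: True
        then have a: "lt (\<xi> 0) (flipl x)" using c by simp
        then have d1: "d0 x \<xi> = 0" using F1 asy by (auto simp: d0_def)
        show ?thesis
        proof (cases "lt (\<eta> 1) x")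
          case True
          then have "d0 x \<eta> = 1" using T2 by (simp add: d0_def)
          then show ?thesis using d1 by simp
        next
          case False
          then have "lt x (\<eta> 1)" using tot n2 T2 by blast
          then have "lexat (actE x \<xi>) (actE x \<eta>) 0" using T2 F1
            by (auto simp: lexat_def actE_def ctxs_def)
          moreover have "d0 x \<eta> = 0" using T2 False by (simp add: d0_def)
          ultimately show ?thesis using d1 by (auto simp: lexE_def)
        qed
      next
        case F2: False
        show ?thesis
        proof (cases "lt (flipl x) (\<xi> 0) = lt (flipl x) (\<eta> 0)")
          case True
          then have "d0 x \<xi> = d0 x \<eta>" using F1 F2 by (simp add: d0_def)
          moreover have "lexat (actE x \<xi>) (actE x \<eta>) 1" using True F1 F2 c
            by (auto simp: lexat_def actE_def ctxs_def rot_def)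
          ultimately show ?thesis by (auto simp: lexE_def)
        next
          case False
          then have "lt (flipl x) (\<eta> 0)" "\<not> lt (flipl x) (\<xi> 0)" using c tr by blast+
          then show ?thesis using F1 F2 by (simp add: d0_def)
        qed
      qed
    qed
  next
    case 2
    then have e0: "\<xi> 0 = \<eta> 0" using ag by simp
    have c: "rot (flipl (\<xi> 0)) (\<xi> 1) (\<eta> 1)" using cm 2 by (simp add: ctxs_def)
    show ?thesis
    proof (cases "\<xi> 0 = flipl x")
      case True
      then have c': "rot x (\<xi> 1) (\<eta> 1)" using c by simp
      have ne: "\<xi> 1 \<noteq> \<eta> 1" using c ctxo_irr[of "Some (flipl (\<xi> 0))" "\<eta> 1"] by auto
      have T0: "\<eta> 0 = flipl x" using True e0 by simp
      have ax: "actE x \<xi> 0 = \<xi> 1" "actE x \<eta> 0 = \<eta> 1" using True T0 by (simp_all add: actE_def)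
      show ?thesis
      proof (cases "lt (\<xi> 1) x")
        case L: True
        then have "\<not> lt x (\<xi> 1)" using asy by blast
        then have q: "\<not> lt x (\<eta> 1)" "lt (\<xi> 1) (\<eta> 1)" using c' by (simp_all add: rot_def)
        then have "lt (\<eta> 1) x" using tot n2 T0 by blast
        then have "d0 x \<xi> = d0 x \<eta>" using L True T0 by (simp add: d0_def)
        moreover have "lexat (actE x \<xi>) (actE x \<eta>) 0" using q ax by (simp add: lexat_def ctxs_def)
        ultimately show ?thesis by (auto simp: lexE_def)
      next
        case L: False
        then have lx: "lt x (\<xi> 1)" using tot n1 True by blast
        show ?thesis
        proof (cases "lt x (\<eta> 1)")
          case True
          then have q: "lt (\<xi> 1) (\<eta> 1)" using c' lx by (simp add: rot_def)
          have "\<not> lt (\<eta> 1) x" using True asy by blast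
          then have "d0 x \<xi> = d0 x \<eta>" using L \<open>\<xi> 0 = flipl x\<close> T0 by (simp add: d0_def)
          moreover have "lexat (actE x \<xi>) (actE x \<eta>) 0" using q ax by (simp add: lexat_def ctxs_def)
          ultimately show ?thesis by (auto simp: lexE_def)
        next
          case False
          then have "lt (\<eta> 1) x" using tot n2 T0 by blast
          then show ?thesis using L \<open>\<xi> 0 = flipl x\<close> T0 by (simp add: d0_def)
        qed
      qed
    next
      case False
      then have "d0 x \<xi> = d0 x \<eta>" using e0 by (simp add: d0_def)
      moreover have "lexat (actE x \<xi>) (actE x \<eta>) 2"
      proof -
        have "\<forall>i<2. actE x \<xi> i = actE x \<eta> i"
        proof (intro allI impI)
          fix i :: nat assume "i < 2"
          then consider "i = 0" | "i = Suc 0" by linarith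
          then show "actE x \<xi> i = actE x \<eta> i"
            by cases (simp_all add: actE_pre False e0[symmetric])
        qed
        moreover have "ctxs (actE x \<xi>) 2 = Some (flipl (\<xi> 0))"
          using actE_pre(2)[of \<xi> x 0, OF False] by (simp add: ctxs_Suc numeral_2_eq_2)
        moreover have "actE x \<xi> 2 = \<xi> 1" "actE x \<eta> 2 = \<eta> 1"
          using actE_pre(2)[of \<xi> x 1, OF False] actE_pre(2)[of \<eta> x 1] False e0
          by (simp_all add: numeral_2_eq_2)
        ultimately show ?thesis using c by (simp add: lexat_def)
      qed
      ultimately show ?thesis by (auto simp: lexE_def)
    qed
  next
    case 3
    then have e0: "\<xi> 0 = \<eta> 0" "\<xi> 1 = \<eta> 1" using ag by auto
    then have dd: "d0 x \<xi> = d0 x \<eta>" by (simp add: d0_def)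
    show ?thesis
    proof (cases "\<xi> 0 = flipl x")
      case True
      have T0: "\<eta> 0 = flipl x" using True e0 by simp
      have "lexat (actE x \<xi>) (actE x \<eta>) (Suc j)"
        unfolding lexat_def actE_can[of \<xi> x, OF True] actE_can[of \<eta> x, OF T0] ctxs_Suc
        using ag cm 3 by (simp add: ctxs_Suc)
      then show ?thesis using dd by (auto simp: lexE_def)
    next
      case False
      have F0: "\<eta> 0 \<noteq> flipl x" using False e0 by simp
      have "\<forall>i<Suc (Suc (Suc j)). actE x \<xi> i = actE x \<eta> i"
      proof (intro allI impI)
        fix i :: nat assume i: "i < Suc (Suc (Suc j))"
        show "actE x \<xi> i = actE x \<eta> i"
        proof (cases i)
          case 0 then show ?thesis by (simp add: actE_pre False F0)
        next
          case (Suc i') then show ?thesis using ag 3 i by (simp add: actE_pre False F0)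
        qed
      qed
      moreover have "ctxs (actE x \<xi>) (Suc (Suc (Suc j))) = ctxs \<xi> k"
        using 3 by (simp add: ctxs_Suc actE_pre False)
      ultimately have "lexat (actE x \<xi>) (actE x \<eta>) (Suc (Suc (Suc j)))"
        using cm 3 by (simp add: lexat_def actE_pre False F0)
      then show ?thesis using dd by (auto simp: lexE_def)
    qed
  qed
qed

definition dl :: "'a \<times> bool \<Rightarrow> (nat \<Rightarrow> 'a \<times> bool) \<Rightarrow> int" where
  "dl x \<xi> = d0 x \<xi> - (if snd x then 0 else 1)"

fun liftlt :: "int \<times> (nat \<Rightarrow> 'a \<times> bool) \<Rightarrow> int \<times> (nat \<Rightarrow> 'a \<times> bool) \<Rightarrow> bool" where
  "liftlt (m, \<xi>) (n, \<eta>) = (m < n \<or> (m = n \<and> lexE \<xi> \<eta>))"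

lemma liftlt_irr: "\<not> liftlt p p"
  by (cases p) (simp add: lexE_irr)

lemma liftlt_tr: "liftlt p q \<Longrightarrow> liftlt q r \<Longrightarrow> liftlt p r"
  by (cases p; cases q; cases r) (auto intro: lexE_tr)

lemma liftlt_tot: "p \<noteq> q \<Longrightarrow> liftlt p q \<or> liftlt q p"
  by (cases p; cases q) (auto dest: lexE_tot)

lemma lift_mono:
  assumes r1: "redE \<xi>" and r2: "redE \<eta>" and l: "liftlt (m, \<xi>) (n, \<eta>)"
  shows "liftlt (m + dl x \<xi>, actE x \<xi>) (n + dl x \<eta>, actE x \<eta>)"
proof (cases "m < n")
  case True
  show ?thesis
  proof (cases "d0 x \<xi> > d0 x \<eta>")
    case True
    then have "lexE (actE x \<xi>) (actE x \<eta>)" using K2 r1 r2 by blast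
    then show ?thesis using d0_cases[of x \<xi>] d0_cases[of x \<eta>] \<open>m < n\<close>
      by (auto simp: dl_def)
  next
    case False
    then show ?thesis using \<open>m < n\<close> by (auto simp: dl_def)
  qed
next
  case False
  then have "m = n" "lexE \<xi> \<eta>" using l by auto
  then show ?thesis using K1[OF r1 r2, of x] by (auto simp: dl_def)
qed

lemma d0_inv: assumes r: "redE \<xi>" shows "d0 x (actE (flipl x) \<xi>) + d0 (flipl x) \<xi> = 1"
proof (cases "\<xi> 0 = x")
  case True
  have n: "\<xi> 1 \<noteq> flipl x" using r True unfolding redE_def by (metis One_nat_def)
  have a: "actE (flipl x) \<xi> i = \<xi> (Suc i)" for i using True by (simp add: actE_def)
  have "lt (\<xi> 1) (flipl x) \<or> lt (flipl x) (\<xi> 1)" using tot n by blast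
  then show ?thesis using True n a[of 0] a[of 1] asy[of "\<xi> 1" "flipl x"]
    by (auto simp: d0_def)
next
  case False
  have a: "actE (flipl x) \<xi> 0 = flipl x" "actE (flipl x) \<xi> 1 = \<xi> 0"
    using False by (simp_all add: actE_def)
  have "lt (\<xi> 0) x \<or> lt x (\<xi> 0)" using tot False by blast
  then show ?thesis using False a asy[of "\<xi> 0" x] by (auto simp: d0_def)
qed

lemma dl_inv: assumes r: "redE \<xi>" shows "dl x (actE (flipl x) \<xi>) + dl (flipl x) \<xi> = 0"
  using d0_inv[OF r, of x] by (simp add: dl_def)

fun NV :: "'a \<Rightarrow> ('a \<times> bool) list \<Rightarrow> int" where
  "NV a [] = 0"
| "NV a (x # V) = NV a V + dl x (endV a V)"

lemma redE_endV: assumes "repV a V" shows "redE (endV a V)"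
  unfolding redE_def
proof
  fix i
  show "endV a V (Suc i) \<noteq> flipl (endV a V i)"
  proof (cases "Suc i < length V")
    case True
    then show ?thesis using assms by (auto simp: endV_def repV_def reduced_nth)
  next
    case False
    show ?thesis
    proof (cases "i < length V")
      case True
      then have "i = length V - 1" "V \<noteq> []" using False by auto
      then have "V ! i = last V" by (simp add: last_conv_nth)
      then show ?thesis using assms True False
        by (auto simp: endV_def repV_def flipl_def)
    next
      case False
      then show ?thesis by (auto simp: endV_def flipl_def)
    qed
  qed
qed

lemma endV_Cons: "endV a (y # V) = (\<lambda>i. case i of 0 \<Rightarrow> y | Suc j \<Rightarrow> endV a V j)"
  by (auto simp: endV_def split: nat.splits)

lemma endV_0: "endV a V 0 = (if V = [] then (a, True) else hd V)"
  by (cases V) (auto simp: endV_def)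

lemma endV_Cons_act: assumes "(V = [] \<and> fst y \<noteq> a) \<or> (V \<noteq> [] \<and> hd V \<noteq> flipl y)"
  shows "endV a (y # V) = actE y (endV a V)"
proof -
  have "endV a V 0 \<noteq> flipl y" using assms by (auto simp: endV_0 flipl_def)
  then show ?thesis by (simp add: actE_def endV_Cons)
qed

lemma rep_consact: "repV a V \<Longrightarrow> repV a (consact a x V)"
  by (cases V) (auto simp: repV_def consact_def reduced_Cons)

lemma endV_consact: assumes r: "repV a V" shows "endV a (consact a x V) = actE x (endV a V)"
proof (cases "V \<noteq> [] \<and> hd V = flipl x")
  case True
  then obtain V' where V: "V = flipl x # V'" by (cases V) auto
  show ?thesis using V by (auto simp: consact_def actE_def endV_Cons)
next
  case F: False
  show ?thesis
  proof (cases "V = [] \<and> fst x = a")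
    case True
    then have V: "V = []" by simp
    obtain b where x: "x = (a, b)" using True by (cases x) auto
    show ?thesis
    proof (cases b)
      case True then show ?thesis using V x
        by (auto simp: consact_def actE_def endV_def flipl_def split: nat.splits)
    next
      case False then show ?thesis using V x
        by (auto simp: consact_def actE_def endV_def flipl_def)
    qed
  next
    case False
    then have "consact a x V = x # V" using F by (auto simp: consact_def)
    moreover have "endV a (x # V) = actE x (endV a V)"
      using F False by (intro endV_Cons_act) auto
    ultimately show ?thesis by simp
  qed
qed

lemma NV_consact: assumes r: "repV a V" shows "NV a (consact a x V) = NV a V + dl x (endV a V)"
proof (cases "V \<noteq> [] \<and> hd V = flipl x")
  case True
  then obtain V' where V: "V = flipl x # V'" by (cases V) auto
  have rV': "repV a V'" using r V by (cases V') (auto simp: repV_def reduced_Cons)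
  have c: "(V' = [] \<and> fst (flipl x) \<noteq> a) \<or> (V' \<noteq> [] \<and> hd V' \<noteq> flipl (flipl x))"
    using r V by (cases V') (auto simp: repV_def reduced_Cons)
  have e: "endV a V = actE (flipl x) (endV a V')" using endV_Cons_act[OF c] V by simp
  have "dl x (endV a V) + dl (flipl x) (endV a V') = 0"
    using e dl_inv[OF redE_endV[OF rV'], of x] by simp
  then show ?thesis using V by (simp add: consact_def)
next
  case F: False
  show ?thesis
  proof (cases "V = [] \<and> fst x = a")
    case True
    then have V: "V = []" by simp
    obtain b where x: "x = (a, b)" using True by (cases x) auto
    have tf': "lt (a, True) (a, False)" by (rule tf)
    show ?thesis
    proof (cases b)
      case True then show ?thesis using V x asy[OF tf']
        by (auto simp: consact_def dl_def d0_def endV_def flipl_def)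
    next
      case False then show ?thesis using V x tf'
        by (auto simp: consact_def dl_def d0_def endV_def flipl_def)
    qed
  next
    case False
    then show ?thesis using F by (auto simp: consact_def)
  qed
qed

lemma endV_inj: assumes "repV a V" "repV a W" "endV a V = endV a W" shows "V = W"
proof -
  have lenle: "\<not> length V < length W" if rV: "repV a V" and rW: "repV a W"
    and e: "endV a V = endV a W" for V W
  proof
    assume l: "length V < length W"
    then have W: "W \<noteq> []" by auto
    have "\<not> (length W - 1 < length V)" using l by linarith
    then have "endV a V (length W - 1) = (a, True)" by (simp add: endV_def)
    moreover have "endV a W (length W - 1) = last W" using W by (simp add: endV_def last_conv_nth)
    ultimately have "last W = (a, True)" using e by simp
    then show False using rW W by (simp add: repV_def)
  qed
  have "length V = length W" using lenle[OF assms] lenle[OF assms(2,1) assms(3)[symmetric]] by linarith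
  moreover have "V ! i = W ! i" if "i < length V" for i
    using fun_cong[OF assms(3), of i] that \<open>length V = length W\<close> by (simp add: endV_def)
  ultimately show ?thesis by (simp add: nth_equalityI)
qed

definition ltV :: "'a \<Rightarrow> ('a \<times> bool) list \<Rightarrow> ('a \<times> bool) list \<Rightarrow> bool" where
  "ltV a V W = liftlt (NV a V, endV a V) (NV a W, endV a W)"

lemma ltV_mono: assumes "repV a V" "repV a W" "ltV a V W"
  shows "ltV a (consact a x V) (consact a x W)"
  using lift_mono[OF redE_endV[OF assms(1)] redE_endV[OF assms(2)], of "NV a V" "NV a W" x] assms(3)
  by (simp add: ltV_def NV_consact endV_consact assms(1,2))

lemma ltV_irr: "\<not> ltV a V V"
  by (simp add: ltV_def liftlt_irr)

lemma ltV_tr: "ltV a U V \<Longrightarrow> ltV a V W \<Longrightarrow> ltV a U W"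
  unfolding ltV_def by (rule liftlt_tr)

lemma ltV_tot: "repV a V \<Longrightarrow> repV a W \<Longrightarrow> V \<noteq> W \<Longrightarrow> ltV a V W \<or> ltV a W V"
  unfolding ltV_def using endV_inj liftlt_tot by (metis prod.inject)

end

lemma reduced_rev: "reduced (rev w) \<longleftrightarrow> reduced w"
proof (induction w)
  case Nil then show ?case by simp
next
  case (Cons x w)
  have "reduced (rev (x # w)) \<longleftrightarrow> reduced (rev w) \<and> (w = [] \<or> x \<noteq> flipl (hd w))"
    by (simp add: reduced_append last_rev)
  also have "\<dots> \<longleftrightarrow> reduced (x # w)"
    using Cons.IH by (auto simp: reduced_Cons)
  finally show ?case .
qed

definition repw :: "'a \<Rightarrow> 'a word \<Rightarrow> bool" where
  "repw a w = (reduced w \<and> (w = [] \<or> fst (hd w) \<noteq> a))"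

lemma repw_rev: "repw a w \<longleftrightarrow> repV a (rev w)"
  by (simp add: repw_def repV_def reduced_rev last_rev)

lemma reduce_snoc: assumes "reduced w"
  shows "reduce (w @ [y]) = (if w \<noteq> [] \<and> last w = flipl y then butlast w else w @ [y])"
proof (cases "w \<noteq> [] \<and> last w = flipl y")
  case True
  then obtain w' where w: "w = w' @ [flipl y]" by (metis append_butlast_last_id)
  have "reduce (w @ [y]) = foldr red_step w' (red_step (flipl y) [y])"
    using w by (simp add: reduce_append reduce_def)
  also have "\<dots> = reduce w'" by (simp add: cancels_iff reduce_def)
  also have "\<dots> = w'" using assms w by (simp add: reduced_append reduce_reduced)
  finally show ?thesis using w True by simp
next
  case False
  then have "reduced (w @ [y])" using assms by (auto simp: reduced_append)
  then show ?thesis using False by (auto simp: reduce_reduced)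
qed

lemma strip_red_step: "fst x = a \<Longrightarrow> strip a (red_step x r) = strip a r"
  by (cases r) (auto simp: strip_def cancels_def)

lemma strip_foldr: "\<forall>x\<in>set t. fst x = a \<Longrightarrow> strip a (foldr red_step t r) = strip a r"
  by (induction t) (auto simp: strip_red_step)

lemma strip_reduce_app: "strip a (reduce (p @ g)) = strip a (reduce (strip a p @ g))"
proof -
  have p: "reduce (p @ g) = reduce (takeWhile (\<lambda>x. fst x = a) p @ (strip a p @ g))"
    unfolding strip_def by (metis append.assoc takeWhile_dropWhile_id)
  have q: "\<forall>x\<in>set (takeWhile (\<lambda>x. fst x = a) p). fst x = a"
    by (auto dest: set_takeWhileD)
  show ?thesis unfolding p reduce_append[of "takeWhile _ p"] using strip_foldr[OF q] by simp
qed

lemma strip_step: "strip a (reduce (w @ y # g)) = strip a (reduce (strip a (reduce (w @ [y])) @ g))"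
proof -
  have "strip a (reduce (strip a (reduce (w @ [y])) @ g)) = strip a (reduce (reduce (w @ [y]) @ g))"
    by (rule strip_reduce_app[symmetric])
  also have "\<dots> = strip a (reduce (w @ y # g))" by (simp add: reduce_reduce_append)
  finally show ?thesis by simp
qed

lemma strip_rep: "repw a w \<Longrightarrow> strip a w = w"
  by (cases w) (auto simp: repw_def strip_def)

lemma rev_butlast: "rev (butlast w) = tl (rev w)"
  using butlast_rev[of "rev w"] by simp

lemma rev_act: assumes r: "repw a w"
  shows "rev (strip a (reduce (w @ [y]))) = consact a y (rev w)"
proof (cases "w \<noteq> [] \<and> last w = flipl y")
  case True
  have red: "reduce (w @ [y]) = butlast w" using reduce_snoc[of w y] r True by (auto simp: repw_def)
  have "strip a (butlast w) = butlast w"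
  proof (cases "butlast w")
    case Nil then show ?thesis by (simp add: strip_def)
  next
    case (Cons z zs)
    then have "hd w = z" using True by (metis append_butlast_last_id hd_append2 list.sel(1) list.simps(3))
    then show ?thesis using r Cons True by (simp add: strip_def repw_def)
  qed
  then show ?thesis using True red
    by (simp add: consact_def hd_rev rev_butlast)
next
  case False
  have red: "reduce (w @ [y]) = w @ [y]" using reduce_snoc[of w y] r False by (auto simp: repw_def)
  show ?thesis
  proof (cases "w = []")
    case True
    then show ?thesis using red by (auto simp: consact_def strip_def)
  next
    case False
    then have "strip a (w @ [y]) = w @ [y]" using r by (cases w) (auto simp: strip_def repw_def)
    then show ?thesis using red False \<open>\<not> (w \<noteq> [] \<and> last w = flipl y)\<close>
      by (auto simp: consact_def hd_rev)
  qed
qed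

lemma fq_op_eq: "fq_op (a, w) (b, u) = (a, strip a (reduce (w @ inv_word u @ [(b, True)] @ u)))"
  by (simp add: fq_op_def fg_mult_def reduce_reduce_append)

lemma carrier_repw: "(a, w) \<in> fq_carrier S \<Longrightarrow> repw a w"
  by (auto simp: fq_carrier_def fg_carrier_def repw_def)

context lo
begin

lemma repw_act: assumes "repw a w" shows "repw a (strip a (reduce (w @ [y])))"
proof -
  have "repV a (rev w)" using assms by (simp only: repw_rev)
  then have "repV a (consact a y (rev w))" by (rule rep_consact)
  then show ?thesis by (simp only: repw_rev rev_act[OF assms])
qed

lemma mono_g: "repw a w \<Longrightarrow> repw a w' \<Longrightarrow> ltV a (rev w) (rev w') \<Longrightarrow>
  ltV a (rev (strip a (reduce (w @ g)))) (rev (strip a (reduce (w' @ g))))"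
proof (induction g arbitrary: w w')
  case Nil
  have "reduce w = w" "reduce w' = w'" using Nil.prems reduce_reduced unfolding repw_def by blast+
  then show ?case using Nil.prems strip_rep[of a w] strip_rep[of a w'] by simp
next
  case (Cons y g)
  let ?w1 = "strip a (reduce (w @ [y]))" and ?w1' = "strip a (reduce (w' @ [y]))"
  have r: "repw a ?w1" "repw a ?w1'" using Cons.prems by (simp_all add: repw_act)
  have rv: "repV a (rev w)" "repV a (rev w')" using Cons.prems(1,2) by (simp_all only: repw_rev)
  have "ltV a (consact a y (rev w)) (consact a y (rev w'))" using ltV_mono[OF rv Cons.prems(3)] .
  then have "ltV a (rev ?w1) (rev ?w1')"
    using rev_act[OF Cons.prems(1)] rev_act[OF Cons.prems(2)] by simp
  then have "ltV a (rev (strip a (reduce (?w1 @ g)))) (rev (strip a (reduce (?w1' @ g))))"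
    using Cons.IH r by blast
  moreover have "strip a (reduce (w @ y # g)) = strip a (reduce (?w1 @ g))" by (rule strip_step)
  moreover have "strip a (reduce (w' @ y # g)) = strip a (reduce (?w1' @ g))" by (rule strip_step)
  ultimately show ?case by metis
qed

definition Rq :: "('a \<times> 'a word) rel" where
  "Rq = {(p, q). lt (fst p, True) (fst q, True) \<or> (fst p = fst q \<and> ltV (fst p) (rev (snd p)) (rev (snd q)))}"

lemma ro: fixes S :: "'a set" shows "right_orderable (fq_carrier S) fq_op"
  unfolding right_orderable_def
proof (intro exI conjI)
  show "strict_linear_order_on (fq_carrier S) Rq"
    unfolding strict_linear_order_on_def
  proof (intro conjI)
    show "trans Rq"
      unfolding trans_def
    proof (intro allI impI)
      fix p q r assume a1: "(p, q) \<in> Rq" and a2: "(q, r) \<in> Rq"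
      show "(p, r) \<in> Rq"
        using a1 a2 tr[of "(fst p, True)" "(fst q, True)" "(fst r, True)"]
          ltV_tr[of "fst p" "rev (snd p)" "rev (snd q)" "rev (snd r)"]
        unfolding Rq_def by auto
    qed
    show "irrefl Rq"
      unfolding irrefl_def Rq_def by (auto simp: irr ltV_irr)
    show "total_on (fq_carrier S) Rq"
      unfolding total_on_def
    proof (intro ballI impI)
      fix p q assume p: "p \<in> fq_carrier S" and q: "q \<in> fq_carrier S" and ne: "p \<noteq> q"
      obtain a w where pw: "p = (a, w)" by (cases p)
      obtain b u where qu: "q = (b, u)" by (cases q)
      show "(p, q) \<in> Rq \<or> (q, p) \<in> Rq"
      proof (cases "a = b")
        case True
        then have "rev w \<noteq> rev u" using ne pw qu by simp
        moreover have "repV a (rev w)" "repV a (rev u)"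
          using carrier_repw[of a w S] carrier_repw[of b u S] p q pw qu True by (simp_all add: repw_rev)
        ultimately show ?thesis using ltV_tot pw qu True unfolding Rq_def by auto
      next
        case False
        then have "(a, True) \<noteq> (b, True)" by simp
        then show ?thesis using tot pw qu unfolding Rq_def by auto
      qed
    qed
  qed
  show "\<forall>x\<in>fq_carrier S. \<forall>y\<in>fq_carrier S. \<forall>z\<in>fq_carrier S. (x, y) \<in> Rq \<longrightarrow> (fq_op x z, fq_op y z) \<in> Rq"
  proof (intro ballI impI)
    fix x y z assume x: "x \<in> fq_carrier S" and y: "y \<in> fq_carrier S" and z: "z \<in> fq_carrier S"
      and xy: "(x, y) \<in> Rq"
    obtain a w where xw: "x = (a, w)" by (cases x)
    obtain a' w' where yw: "y = (a', w')" by (cases y)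
    obtain b u where zu: "z = (b, u)" by (cases z)
    show "(fq_op x z, fq_op y z) \<in> Rq"
    proof (cases "lt (a, True) (a', True)")
      case True
      then show ?thesis using xw yw zu by (simp add: fq_op_eq Rq_def)
    next
      case False
      then have aa: "a = a'" and l: "ltV a (rev w) (rev w')" using xy xw yw by (auto simp: Rq_def)
      have "repw a w" "repw a w'" using carrier_repw[of a w S] carrier_repw[of a w' S] x y xw yw aa by simp_all
      then have "ltV a (rev (strip a (reduce (w @ inv_word u @ [(b, True)] @ u))))
                         (rev (strip a (reduce (w' @ inv_word u @ [(b, True)] @ u))))"
        using mono_g l by blast
      then show ?thesis using xw yw zu aa by (simp add: fq_op_eq Rq_def)
    qed
  qed
qed

end

lemma exists_lo: "\<exists>lt :: 'a \<times> bool \<Rightarrow> 'a \<times> bool \<Rightarrow> bool. lo lt"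
proof -
  obtain r :: "'a rel" where r: "Well_order r" "Field r = UNIV"
    by (rule someI_ex[OF well_ordering, THEN conjE])
  have lin: "linear_order_on UNIV r" using r(1) unfolding r(2) well_order_on_def by (rule conjunct1)
  define la where "la x y = ((x, y) \<in> r \<and> x \<noteq> y)" for x y :: 'a
  have tr: "trans r" and an: "antisym r" and to: "total_on UNIV r"
    using lin by (simp_all add: linear_order_on_def partial_order_on_def preorder_on_def)
  have la_tr: "la x z" if a1: "la x y" and a2: "la y z" for x y z
  proof -
    have "(x, y) \<in> r" "(y, z) \<in> r" "x \<noteq> y" using a1 a2 by (simp_all add: la_def)
    then have xz: "(x, z) \<in> r" using transD[OF tr] by blast
    have "x \<noteq> z"
    proof
      assume "x = z"
      then have "(y, x) \<in> r" using \<open>(y, z) \<in> r\<close> by simp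
      then show False using antisymD[OF an \<open>(x, y) \<in> r\<close>] \<open>x \<noteq> y\<close> by simp
    qed
    then show ?thesis using xz by (simp add: la_def)
  qed
  have la_tot: "x \<noteq> y \<Longrightarrow> la x y \<or> la y x" for x y
    using to unfolding la_def total_on_def by simp
  define lt where "lt p q = (la (fst p) (fst q) \<or> (fst p = fst q \<and> snd p \<and> \<not> snd q))" for p q :: "'a \<times> bool"
  have "lo lt"
  proof
    show "\<not> lt x x" for x by (simp add: lt_def la_def)
    show "lt x z" if "lt x y" "lt y z" for x y z
    proof -
      have "\<not> la u u" for u by (simp add: la_def)
      then show ?thesis using that la_tr[of "fst x" "fst y" "fst z"] unfolding lt_def by auto
    qed
    show "lt x y \<or> lt y x" if "x \<noteq> y" for x y
    proof (cases "fst x = fst y")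
      case True
      then have "snd x \<noteq> snd y" using that by (simp add: prod_eq_iff)
      then show ?thesis using True unfolding lt_def by auto
    next
      case False
      then show ?thesis using la_tot[OF False] unfolding lt_def by blast
    qed
    show "lt (s, True) (s, False)" for s by (simp add: lt_def)
  qed
  then show ?thesis by blast
qed

lemma right_orderable_fq: "right_orderable (fq_carrier S) fq_op"
proof -
  obtain lt :: "'a \<times> bool \<Rightarrow> 'a \<times> bool \<Rightarrow> bool" where "lo lt" using exists_lo by blast
  then interpret lo lt .
  show ?thesis by (rule ro)
qed

lemma same_fst_letters: "fst x = fst y \<Longrightarrow> y \<noteq> flipl x \<Longrightarrow> y = x"
  by (cases x; cases y) (auto simp: flipl_def)

lemma allA_replicate: "reduced t \<Longrightarrow> \<forall>x\<in>set t. fst x = a \<Longrightarrow> t = replicate (length t) (hd t)"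
proof (induction t)
  case Nil then show ?case by simp
next
  case (Cons x t)
  show ?case
  proof (cases t)
    case Nil then show ?thesis by simp
  next
    case (Cons y t')
    have IH: "t = replicate (length t) y" using Cons.IH Cons.prems Cons by (simp add: reduced_Cons)
    have "y = x" using Cons.prems Cons by (intro same_fst_letters) (auto simp: reduced_Cons)
    then show ?thesis using IH Cons by (metis list.sel(1) replicate_Suc length_Cons)
  qed
qed

lemma esum_replicate: "esum (replicate n x) = int n * (if snd x then 1 else -1)"
  by (induction n) (auto simp: algebra_simps)

lemma allA_eq:
  assumes "reduced t" "reduced t'" "\<forall>x\<in>set t. fst x = a" "\<forall>x\<in>set t'. fst x = a" "esum t = esum t'"
  shows "t = t'"
proof -
  have t: "t = replicate (length t) (hd t)" and t': "t' = replicate (length t') (hd t')"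
    using allA_replicate[OF assms(1) assms(3)] allA_replicate[OF assms(2) assms(4)] by simp_all
  have E: "esum t = int (length t) * (if snd (hd t) then 1 else -1)"
  proof -
    have "esum (replicate (length t) (hd t)) = esum t" by (simp only: t[symmetric])
    then show ?thesis by (simp only: esum_replicate)
  qed
  have E': "esum t' = int (length t') * (if snd (hd t') then 1 else -1)"
  proof -
    have "esum (replicate (length t') (hd t')) = esum t'" by (simp only: t'[symmetric])
    then show ?thesis by (simp only: esum_replicate)
  qed
  have eq: "int (length t) * (if snd (hd t) then 1 else -1) = int (length t') * (if snd (hd t') then 1 else -1)"
    using E E' assms(5) by simp
  show ?thesis
  proof (cases "t = []")
    case True
    then have "length t' = 0" using eq by (cases "snd (hd t')") simp_all
    then show ?thesis using True by simp
  next
    case False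
    have "length t > 0" using False by simp
    then have ne': "length t' > 0" using eq by (cases "snd (hd t)"; cases "snd (hd t')") simp_all
    then have "t' \<noteq> []" by auto
    have h: "fst (hd t) = a" "fst (hd t') = a" using False \<open>t' \<noteq> []\<close> assms(3,4) by auto
    have sl: "snd (hd t) = snd (hd t') \<and> length t = length t'"
      using eq \<open>length t > 0\<close> ne' by (cases "snd (hd t)"; cases "snd (hd t')") simp_all
    then have "hd t = hd t'" using h by (simp add: prod_eq_iff)
    then have "replicate (length t) (hd t) = replicate (length t') (hd t')" using sl by simp
    then show ?thesis by (rule trans[OF t trans[OF _ t'[symmetric]]])
  qed
qed

lemma reduced_prefix: "reduced (xs @ ys) \<Longrightarrow> reduced xs"
  by (simp add: reduced_append)
lemma reduced_suffix: "reduced (xs @ ys) \<Longrightarrow> reduced ys"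
  by (simp add: reduced_append)

lemma strip_eq_esum:
  assumes "reduced p" "reduced p'" "strip a p = strip a p'" "esum p = esum p'"
  shows "p = p'"
proof -
  let ?P = "\<lambda>x. fst x = a"
  have p: "takeWhile ?P p @ strip a p = p" and p': "takeWhile ?P p' @ strip a p' = p'"
    by (simp_all add: strip_def)
  have "esum (takeWhile ?P p) + esum (strip a p) = esum (takeWhile ?P p') + esum (strip a p')"
    using assms(4) esum_append[of "takeWhile ?P p" "strip a p"] esum_append[of "takeWhile ?P p'" "strip a p'"]
    unfolding p p' by simp
  then have e: "esum (takeWhile ?P p) = esum (takeWhile ?P p')" using assms(3) by simp
  have r1: "reduced (takeWhile ?P p)" using reduced_prefix[of "takeWhile ?P p" "strip a p"] assms(1) unfolding p .
  have r2: "reduced (takeWhile ?P p')" using reduced_prefix[of "takeWhile ?P p'" "strip a p'"] assms(2) unfolding p' .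
  have a1: "\<forall>x\<in>set (takeWhile ?P p). fst x = a" "\<forall>x\<in>set (takeWhile ?P p'). fst x = a"
    by (auto dest: set_takeWhileD)
  have "takeWhile ?P p = takeWhile ?P p'" by (rule allA_eq[OF r1 r2 a1 e])
  then have "takeWhile ?P p @ strip a p = takeWhile ?P p' @ strip a p'" using assms(3) by simp
  then show ?thesis unfolding p p' .
qed

lemma inv_word_alt: "inv_word u = rev (map flipl u)"
  by (simp add: inv_word_def flipl_def case_prod_beta)

lemma reduced_map_flipl: "reduced (map flipl u) \<longleftrightarrow> reduced u"
proof -
  have "flipl a = flipl (flipl b) \<longleftrightarrow> a = flipl b" for a b :: "'a \<times> bool"
    by (metis flipl_flipl)
  then show ?thesis by (simp add: reduced_nth)
qed

lemma inv_word_Nil[simp]: "inv_word [] = []"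
  by (simp add: inv_word_def)

lemma esum_inv_word: "esum (inv_word u) = - esum u"
  by (induction u) (auto simp: inv_word_Cons)

lemma conj_word_reduced:
  assumes "repw b u" shows "reduced (inv_word u @ [(b, True)] @ u)"
proof -
  have ru: "reduced u" using assms by (simp add: repw_def)
  have ri: "reduced (inv_word u)" using ru by (simp add: inv_word_alt reduced_rev reduced_map_flipl)
  have h: "u = [] \<or> fst (hd u) \<noteq> b" using assms by (simp add: repw_def)
  have r2: "reduced ([(b, True)] @ u)" using ru h by (cases u) (auto simp: reduced_Cons)
  show ?thesis
  proof (cases "u = []")
    case True
    then show ?thesis by simp
  next
    case False
    have l: "last (inv_word u) = flipl (hd u)" using False
      by (simp add: inv_word_alt last_rev hd_map)
    have ne: "inv_word u \<noteq> []" using False by (simp add: inv_word_alt)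
    have "(b, True) \<noteq> hd u" using h False by (metis fst_conv)
    then have "(b, True) \<noteq> flipl (last (inv_word u))" using l by simp
    then show ?thesis using ri r2 ne by (simp add: reduced_append)
  qed
qed

lemma semi_latin_fq: "semi_latin (fq_carrier S) fq_op"
  unfolding semi_latin_def
proof (intro ballI inj_onI)
  fix x y y' assume x: "x \<in> fq_carrier S" and y: "y \<in> fq_carrier S" and y': "y' \<in> fq_carrier S"
    and eq: "fq_op x y = fq_op x y'"
  obtain a w where xw: "x = (a, w)" by (cases x)
  obtain b u where yu: "y = (b, u)" by (cases y)
  obtain c v where yv: "y' = (c, v)" by (cases y')
  define g where "g = inv_word u @ [(b, True)] @ u"
  define g' where "g' = inv_word v @ [(c, True)] @ v"
  have ru: "repw b u" using carrier_repw[of b u S] y yu by simp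
  have rv: "repw c v" using carrier_repw[of c v S] y' yv by simp
  have rg: "reduced g" unfolding g_def by (rule conj_word_reduced[OF ru])
  have rg': "reduced g'" unfolding g'_def by (rule conj_word_reduced[OF rv])
  have st: "strip a (reduce (w @ g)) = strip a (reduce (w @ g'))"
    using eq xw yu yv by (simp add: fq_op_eq g_def g'_def)
  have es: "esum g = 1" "esum g' = 1" by (simp_all add: g_def g'_def esum_inv_word)
  have "esum (reduce (w @ g)) = esum (reduce (w @ g'))" by (simp add: esum_reduce es)
  then have R: "reduce (w @ g) = reduce (w @ g')"
    by (rule strip_eq_esum[OF reduced_reduce reduced_reduce st])
  have "reduce g = reduce (inv_word w @ reduce (w @ g))" by (simp only: reduce_inv_cancel)
  also have "\<dots> = reduce (inv_word w @ reduce (w @ g'))" by (simp only: R)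
  also have "\<dots> = reduce g'" by (simp only: reduce_inv_cancel)
  finally have "reduce g = reduce g'" .
  then have gg: "g = g'" using reduce_reduced[OF rg] reduce_reduced[OF rg'] by simp
  have "length (inv_word u) = length (inv_word v)"
    using arg_cong[OF gg, of length] by (simp add: g_def g'_def inv_word_alt)
  then have "[(b, True)] @ u = [(c, True)] @ v" using gg unfolding g_def g'_def
    by (simp add: append_eq_append_conv)
  then show "y = y'" using yu yv by simp
qed

theorem theorem3p5:
  fixes S :: "'a set"
  shows "right_orderable (fq_carrier S) fq_op \<and> semi_latin (fq_carrier S) fq_op"
  using right_orderable_fq semi_latin_fq by blast

end
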